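(* Let $G$ be a finite simple $2$-connected graph with at least $4$ vertices. Suppose that there is at most one vertex $x$ of $G$ for which there exists a vertex $y\in V(G)\setminus(N_G(x)\cup\{x\})$ with $|N_G(x)\cup N_G(y)|\leqslant 3$. Then $G$ contains a chorded cycle.
   Context: A chorded cycle is a cycle together with an edge of the graph, not on the cycle, joining two vertices of the cycle. $N_G(x)$ is the set of neighbours of $x$ in $G$. *)

theory Defs
  imports Main
begin

definition simple_graph :: "'a set \<Rightarrow> ('a \<Rightarrow> 'a \<Rightarrow> bool) \<Rightarrow> bool" where
  "simple_graph V E \<longleftrightarrow> finite V \<and> (\<forall>x y. E x y \<longrightarrow> x \<in> V \<and> y \<in> V)
     \<and> (\<forall>x y. E x y \<longrightarrow> E y x) \<and> (\<forall>x. \<not> E x x)"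

definition nbhd :: "'a set \<Rightarrow> ('a \<Rightarrow> 'a \<Rightarrow> bool) \<Rightarrow> 'a \<Rightarrow> 'a set" where
  "nbhd V E x = {y \<in> V. E x y}"

definition is_walk :: "('a \<Rightarrow> 'a \<Rightarrow> bool) \<Rightarrow> 'a list \<Rightarrow> bool" where
  "is_walk E xs \<longleftrightarrow> xs \<noteq> [] \<and> (\<forall>i. Suc i < length xs \<longrightarrow> E (xs ! i) (xs ! Suc i))"

definition connected_on :: "('a \<Rightarrow> 'a \<Rightarrow> bool) \<Rightarrow> 'a set \<Rightarrow> bool" where
  "connected_on E S \<longleftrightarrow> S \<noteq> {} \<and>
     (\<forall>u\<in>S. \<forall>v\<in>S. \<exists>xs. is_walk E xs \<and> hd xs = u \<and> last xs = v \<and> set xs \<subseteq> S)"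

definition two_connected :: "'a set \<Rightarrow> ('a \<Rightarrow> 'a \<Rightarrow> bool) \<Rightarrow> bool" where
  "two_connected V E \<longleftrightarrow> card V > 2 \<and> connected_on E V \<and> (\<forall>v\<in>V. connected_on E (V - {v}))"

definition is_cycle :: "'a set \<Rightarrow> ('a \<Rightarrow> 'a \<Rightarrow> bool) \<Rightarrow> 'a list \<Rightarrow> bool" where
  "is_cycle V E xs \<longleftrightarrow> length xs \<ge> 3 \<and> distinct xs \<and> set xs \<subseteq> V \<and>
     (\<forall>i < length xs. E (xs ! i) (xs ! ((i + 1) mod length xs)))"

definition cycle_edges :: "'a list \<Rightarrow> 'a set set" where
  "cycle_edges xs = {{xs ! i, xs ! ((i + 1) mod length xs)} | i. i < length xs}"

definition has_chorded_cycle :: "'a set \<Rightarrow> ('a \<Rightarrow> 'a \<Rightarrow> bool) \<Rightarrow> bool" where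
  "has_chorded_cycle V E \<longleftrightarrow> (\<exists>xs u v. is_cycle V E xs \<and> u \<in> set xs \<and> v \<in> set xs \<and>
     E u v \<and> {u, v} \<notin> cycle_edges xs)"

end

theory Submission
  imports Defs
begin

definition pth :: "'a set \<Rightarrow> ('a \<Rightarrow> 'a \<Rightarrow> bool) \<Rightarrow> 'a list \<Rightarrow> bool" where
  "pth V E xs \<longleftrightarrow> is_walk E xs \<and> distinct xs \<and> set xs \<subseteq> V"

lemma walk_append:
  assumes "is_walk E xs" "is_walk E ys" "E (last xs) (hd ys)"
  shows "is_walk E (xs @ ys)"
  unfolding is_walk_def
proof (intro conjI allI impI)
  show "xs @ ys \<noteq> []" using assms(1) by (simp add: is_walk_def)
next
  fix i assume i: "Suc i < length (xs @ ys)"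
  have xn: "xs \<noteq> []" "ys \<noteq> []" using assms by (auto simp: is_walk_def)
  consider "Suc i < length xs" | "Suc i = length xs" | "Suc i > length xs" by linarith
  then show "E ((xs @ ys) ! i) ((xs @ ys) ! Suc i)"
  proof cases
    case 1 then show ?thesis using assms(1) by (simp add: is_walk_def nth_append)
  next
    case 2
    then have "i = length xs - 1" by simp
    then show ?thesis using assms(3) xn 2
      by (simp add: nth_append last_conv_nth hd_conv_nth)
  next
    case 3
    then have "Suc (i - length xs) < length ys" using i by simp
    then have "E (ys ! (i - length xs)) (ys ! Suc (i - length xs))" using assms(2) by (simp add: is_walk_def)
    then show ?thesis using 3 by (simp add: nth_append Suc_diff_le)
  qed
qed

lemma walk_rev:
  assumes "\<And>x y. E x y \<Longrightarrow> E y x" "is_walk E xs"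
  shows "is_walk E (rev xs)"
  unfolding is_walk_def
proof (intro conjI allI impI)
  show "rev xs \<noteq> []" using assms(2) by (simp add: is_walk_def)
next
  fix i assume i: "Suc i < length (rev xs)"
  let ?j = "length xs - Suc (Suc i)"
  have "E (xs ! ?j) (xs ! Suc ?j)" using assms(2) i by (simp add: is_walk_def)
  moreover have "Suc ?j = length xs - Suc i" using i by simp
  ultimately show "E (rev xs ! i) (rev xs ! Suc i)" using i assms(1) by (simp add: rev_nth)
qed

lemma walk_take:
  assumes "is_walk E xs" "0 < n" shows "is_walk E (take n xs)"
  using assms by (auto simp: is_walk_def)

lemma walk_drop:
  assumes "is_walk E xs" "n < length xs" shows "is_walk E (drop n xs)"
  using assms by (auto simp: is_walk_def)

lemma chord_lemma:
  assumes sy: "\<And>x y. E x y \<Longrightarrow> E y x" and p: "pth V E ps"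
    and ij: "2 \<le> i" "i < j" "j < length ps"
    and ei: "E (ps!0) (ps!i)" and ej: "E (ps!0) (ps!j)"
  shows "has_chorded_cycle V E"
proof -
  define xs where "xs = take (Suc j) ps"
  have len: "length xs = Suc j" using ij by (simp add: xs_def)
  have nth: "\<And>t. t \<le> j \<Longrightarrow> xs ! t = ps ! t" by (simp add: xs_def)
  have dps: "distinct ps" using p by (simp add: pth_def)
  have inj: "\<And>a b. a < length ps \<Longrightarrow> b < length ps \<Longrightarrow> ps!a = ps!b \<Longrightarrow> a = b"
    using dps nth_eq_iff_index_eq by blast
  have cyc: "is_cycle V E xs"
    unfolding is_cycle_def
  proof (intro conjI allI impI)
    show "3 \<le> length xs" using len ij by simp
    show "distinct xs" using dps by (simp add: xs_def)
    show "set xs \<subseteq> V" using p by (auto simp: xs_def pth_def dest: in_set_takeD)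
  next
    fix t assume t: "t < length xs"
    show "E (xs ! t) (xs ! ((t + 1) mod length xs))"
    proof (cases "t < j")
      case True
      then have "(t+1) mod length xs = Suc t" using len by simp
      then show ?thesis using True nth[of t] nth[of "Suc t"] p ij
        by (simp add: pth_def is_walk_def)
    next
      case False
      then have "t = j" using t len by simp
      then show ?thesis using len nth[of j] nth[of 0] sy[OF ej] by simp
    qed
  qed
  have notin: "{ps!0, ps!i} \<notin> cycle_edges xs"
  proof
    assume "{ps!0, ps!i} \<in> cycle_edges xs"
    then obtain t where t: "t < Suc j" and eq: "{ps!0, ps!i} = {xs ! t, xs ! ((t + 1) mod Suc j)}"
      by (auto simp: cycle_edges_def len)
    show False
    proof (cases "t < j")
      case True
      then have "(t+1) mod Suc j = Suc t" by simp
      then have h1: "{ps!0, ps!i} = {ps!t, ps!Suc t}" using eq nth[of t] nth[of "Suc t"] True by simp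
      have h: "t < length ps" "Suc t < length ps" "i < length ps" using True ij by auto
      have "ps!0 = ps!t \<or> ps!0 = ps!Suc t" using h1 by blast
      moreover have l0: "0 < length ps" using h(3) by linarith
      ultimately have t0: "t = 0" using inj[OF l0 h(1)] inj[OF l0 h(2)] by blast
      have "ps!i = ps!t \<or> ps!i = ps!Suc t" using h1 by blast
      then have "i = t \<or> i = Suc t" using inj[OF h(3) h(1)] inj[OF h(3) h(2)] by blast
      then show False using t0 ij by simp
    next
      case False
      then have "t = j" using t by simp
      then have "{ps!0, ps!i} = {ps!j, ps!0}" using eq nth[of j] nth[of 0] by simp
      then have "ps!i = ps!j \<or> ps!i = ps!0" by blast
      moreover have "i < length ps" "j < length ps" "0 < length ps" using ij by auto
      ultimately have "i = j \<or> i = 0" using inj by blast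
      then show False using ij by simp
    qed
  qed
  have m0: "ps!0 \<in> set xs" using nth[of 0] len nth_mem[of 0 xs] by simp
  have mi: "ps!i \<in> set xs" using nth[of i] len ij nth_mem[of i xs] by simp
  show ?thesis unfolding has_chorded_cycle_def
    using cyc notin ei m0 mi by blast
qed

lemma sg_sym: "simple_graph V E \<Longrightarrow> E x y \<Longrightarrow> E y x"
  by (simp add: simple_graph_def)
lemma sg_V: "simple_graph V E \<Longrightarrow> E x y \<Longrightarrow> x \<in> V \<and> y \<in> V"
  by (simp add: simple_graph_def)
lemma sg_irr: "simple_graph V E \<Longrightarrow> \<not> E x x"
  by (simp add: simple_graph_def)

definition longest :: "'a set \<Rightarrow> ('a \<Rightarrow> 'a \<Rightarrow> bool) \<Rightarrow> 'a list \<Rightarrow> bool" where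
  "longest V E ps \<longleftrightarrow> pth V E ps \<and> (\<forall>qs. pth V E qs \<longrightarrow> length qs \<le> length ps)"

lemma onpath:
  assumes g: "simple_graph V E" and l: "longest V E ps" and e: "E (ps!0) w"
  shows "w \<in> set ps"
proof (rule ccontr)
  assume nw: "w \<notin> set ps"
  have p: "pth V E ps" using l by (simp add: longest_def)
  then have ne: "ps \<noteq> []" by (simp add: pth_def is_walk_def)
  have "is_walk E ([w] @ ps)"
    using walk_append[of E "[w]" ps] p e ne g
    by (simp add: pth_def is_walk_def hd_conv_nth sg_sym)
  moreover have "distinct (w # ps)" using nw p by (simp add: pth_def)
  moreover have "w \<in> V" using sg_V[OF g e] by simp
  ultimately have "pth V E (w # ps)" using p by (simp add: pth_def)
  then show False using l by (fastforce simp: longest_def)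
qed

lemma three_nb:
  assumes g: "simple_graph V E" and l: "longest V E ps" and nc: "\<not> has_chorded_cycle V E"
    and ea: "E (ps!0) a" and eb: "E (ps!0) b" and ec: "E (ps!0) c"
  shows "a = b \<or> a = c \<or> b = c"
proof (rule ccontr)
  assume dd: "\<not> (a = b \<or> a = c \<or> b = c)"
  have p: "pth V E ps" using l by (simp add: longest_def)
  have idx: "\<exists>k. 1 \<le> k \<and> k < length ps \<and> ps!k = x" if "E (ps!0) x" for x
  proof -
    have "x \<in> set ps" using onpath[OF g l that] .
    then obtain k where k: "k < length ps" "ps!k = x" by (auto simp: in_set_conv_nth)
    have "k \<noteq> 0"
    proof
      assume "k = 0" then show False using k sg_irr[OF g] that by simp
    qed
    then have "1 \<le> k" by simp
    then show ?thesis using k by blast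
  qed
  obtain ka where ka: "1 \<le> ka" "ka < length ps" "ps!ka = a" using idx[OF ea] by blast
  obtain kb where kb: "1 \<le> kb" "kb < length ps" "ps!kb = b" using idx[OF eb] by blast
  obtain kc where kc: "1 \<le> kc" "kc < length ps" "ps!kc = c" using idx[OF ec] by blast
  have key: "False" if "1 \<le> p" "p < q" "q < r" "r < length ps" "E (ps!0) (ps!q)" "E (ps!0) (ps!r)" for p q r
    using chord_lemma[of E V ps q r] that sg_sym[OF g] p nc by auto
  have "ka \<noteq> kb" "ka \<noteq> kc" "kb \<noteq> kc" using dd ka kb kc by auto
  then consider "ka < kb" "kb < kc" | "ka < kc" "kc < kb" | "kb < ka" "ka < kc"
    | "kb < kc" "kc < ka" | "kc < ka" "ka < kb" | "kc < kb" "kb < ka" by linarith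
  then show False
    by cases (use key ka kb kc ea eb ec in metis)+
qed

lemma deg2:
  assumes g: "simple_graph V E" and c: "two_connected V E" and four: "card V \<ge> 4"
    and v: "v \<in> V"
  shows "\<exists>w. E v w \<and> w \<noteq> u"
proof -
  have fin: "finite V" using g by (simp add: simple_graph_def)
  have gen: "\<exists>w. E v w \<and> w \<noteq> u'" if uv: "u' \<noteq> v" for u'
  proof -
    have conn: "connected_on E (V - {u'})"
    proof (cases "u' \<in> V")
      case True then show ?thesis using c by (simp add: two_connected_def)
    next
      case False then show ?thesis using c by (simp add: two_connected_def)
    qed
    have "\<not> V \<subseteq> {u', v}"
    proof
      assume "V \<subseteq> {u', v}"
      then have "card V \<le> card {u', v}" by (simp add: card_mono)
      also have "\<dots> \<le> 2" by (simp add: card_insert_if)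
      finally show False using four by simp
    qed
    then obtain z where z: "z \<in> V" "z \<noteq> u'" "z \<noteq> v" by blast
    obtain xs where xs: "is_walk E xs" "hd xs = v" "last xs = z" "set xs \<subseteq> V - {u'}"
      using conn z v uv unfolding connected_on_def by blast
    have ne: "xs \<noteq> []" using xs by (simp add: is_walk_def)
    have "length xs \<noteq> 1"
    proof
      assume "length xs = 1"
      then have "hd xs = last xs" using ne by (simp add: hd_conv_nth last_conv_nth)
      then show False using xs z by simp
    qed
    then have l2: "Suc 1 \<le> length xs" using ne by (cases xs) (auto simp: Suc_le_eq)
    have "E (xs!0) (xs!1)" using xs(1) l2 by (simp add: is_walk_def)
    moreover have "xs!1 \<in> set xs" using l2 by simp
    ultimately show ?thesis using xs ne by (auto simp: hd_conv_nth)
  qed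
  show ?thesis
  proof (cases "u = v")
    case False then show ?thesis using gen by simp
  next
    case True
    have "\<not> V \<subseteq> {v}"
    proof
      assume "V \<subseteq> {v}"
      then have "card V \<le> card {v}" by (intro card_mono) auto
      then show False using four by simp
    qed
    then obtain u' where "u' \<in> V" "u' \<noteq> v" by blast
    then obtain w where "E v w" using gen by blast
    then show ?thesis using True sg_irr[OF g] by blast
  qed
qed

lemma closed_walk:
  assumes w: "is_walk E xs" and s: "set xs \<subseteq> V - {c}" and h: "hd xs \<in> A"
    and cl: "\<forall>a\<in>A. \<forall>w. E a w \<longrightarrow> w \<in> A \<or> w = c"
  shows "last xs \<in> A"
proof -
  have ne: "xs \<noteq> []" using w by (simp add: is_walk_def)
  have "\<forall>t. t < length xs \<longrightarrow> xs!t \<in> A"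
  proof (intro allI)
    fix t show "t < length xs \<longrightarrow> xs!t \<in> A"
    proof (induction t)
      case 0 then show ?case using h ne by (simp add: hd_conv_nth)
    next
      case (Suc t)
      show ?case
      proof
        assume t: "Suc t < length xs"
        then have a: "xs!t \<in> A" using Suc by simp
        have e: "E (xs!t) (xs!Suc t)" using w t by (simp add: is_walk_def)
        have "xs!Suc t \<noteq> c" using s t nth_mem[OF t] by blast
        then show "xs!Suc t \<in> A" using cl a e by blast
      qed
    qed
  qed
  then show ?thesis using ne by (simp add: last_conv_nth)
qed

theorem corollary2p10:
  fixes V :: "'a set" and E :: "'a \<Rightarrow> 'a \<Rightarrow> bool"
  assumes "simple_graph V E"
    and "two_connected V E"
    and "card V \<ge> 4"
    and "\<forall>x1 x2. (x1 \<in> V \<and> (\<exists>y \<in> V - (nbhd V E x1 \<union> {x1}). card (nbhd V E x1 \<union> nbhd V E y) \<le> 3))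
               \<and> (x2 \<in> V \<and> (\<exists>y \<in> V - (nbhd V E x2 \<union> {x2}). card (nbhd V E x2 \<union> nbhd V E y) \<le> 3))
               \<longrightarrow> x1 = x2"
  shows "has_chorded_cycle V E"
proof (rule ccontr)
  assume nc: "\<not> has_chorded_cycle V E"
  note g = assms(1)
  have fin: "finite V" using g by (simp add: simple_graph_def)
  have sy: "\<And>x y. E x y \<Longrightarrow> E y x" using sg_sym[OF g] .
  have "V \<noteq> {}" using assms(3) by auto
  then obtain v0 where v0: "v0 \<in> V" by blast
  have p0: "pth V E [v0]" using v0 by (simp add: pth_def is_walk_def)
  have bnd: "\<forall>qs. pth V E qs \<longrightarrow> length qs \<le> card V"
  proof (intro allI impI)
    fix qs assume "pth V E qs"
    then have "distinct qs" "set qs \<subseteq> V" by (auto simp: pth_def)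
    then show "length qs \<le> card V" using fin by (metis card_mono distinct_card)
  qed
  obtain n where n: "\<exists>qs. pth V E qs \<and> length qs = n" "\<forall>m. (\<exists>qs. pth V E qs \<and> length qs = m) \<longrightarrow> m \<le> n"
    using Nat.ex_has_greatest_nat[of "\<lambda>m. \<exists>qs. pth V E qs \<and> length qs = m" 1 "card V"] p0 bnd
    by fastforce
  then obtain ps where ps: "pth V E ps" "length ps = n" by blast
  have l: "longest V E ps" using ps n(2) by (auto simp: longest_def)
  have wk: "is_walk E ps" and dps: "distinct ps" and sV: "set ps \<subseteq> V" using ps by (auto simp: pth_def)
  have inj: "\<And>a b. a < length ps \<Longrightarrow> b < length ps \<Longrightarrow> ps!a = ps!b \<Longrightarrow> a = b"
    using dps nth_eq_iff_index_eq by blast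
  have ne: "ps \<noteq> []" using wk by (simp add: is_walk_def)
  have x0V: "ps!0 \<in> V" using sV ne by auto
  obtain w1 where w1: "E (ps!0) w1" using deg2[OF g assms(2,3) x0V] by blast
  have "w1 \<in> set ps" using onpath[OF g l w1] .
  moreover have "w1 \<noteq> ps!0" using w1 sg_irr[OF g] by auto
  ultimately have len2: "2 \<le> length ps"
    using ne by (cases ps; cases "tl ps") auto
  have e01: "E (ps!0) (ps!1)" using wk len2 by (simp add: is_walk_def)
  obtain w2 where w2: "E (ps!0) w2" "w2 \<noteq> ps!1" using deg2[OF g assms(2,3) x0V] by blast
  have "w2 \<in> set ps" using onpath[OF g l w2(1)] .
  then obtain i where i: "i < length ps" "ps!i = w2" by (auto simp: in_set_conv_nth)
  have "i \<noteq> 0"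
  proof
    assume "i = 0" then show False using i w2 sg_irr[OF g] by simp
  qed
  moreover have "i \<noteq> 1" using i w2 by auto
  ultimately have i2: "2 \<le> i" by simp
  have e0i: "E (ps!0) (ps!i)" using i w2 by simp
  have d1i: "ps!1 \<noteq> ps!i" using w2 i by simp
  have N0: "\<And>w. E (ps!0) w \<Longrightarrow> w = ps!1 \<or> w = ps!i"
    using three_nb[OF g l nc e01 e0i] d1i by blast
  define qs where "qs = rev (take i ps) @ drop i ps"
  have wq: "is_walk E qs" unfolding qs_def
  proof (rule walk_append)
    show "is_walk E (rev (take i ps))" using walk_rev[OF sy walk_take[OF wk]] i2 by simp
    show "is_walk E (drop i ps)" using walk_drop[OF wk i(1)] .
    have "last (rev (take i ps)) = ps!0" using i2 ne by (simp add: last_rev hd_take hd_conv_nth)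
    moreover have "hd (drop i ps) = ps!i" using i(1) by (simp add: hd_drop_conv_nth)
    ultimately show "E (last (rev (take i ps))) (hd (drop i ps))" using e0i by simp
  qed
  have "distinct qs" unfolding qs_def using dps set_take_disj_set_drop_if_distinct[OF dps]
    by (metis append_take_drop_id distinct_append distinct_rev set_rev)
  moreover have "set qs = set ps" unfolding qs_def by (metis append_take_drop_id set_append set_rev)
  ultimately have pq: "pth V E qs" using wq sV by (simp add: pth_def)
  have lq: "length qs = length ps" using i by (simp add: qs_def)
  have lgq: "longest V E qs" using pq lq l by (simp add: longest_def)
  have q0: "qs!0 = ps!(i-1)" using i i2 by (simp add: qs_def nth_append rev_nth)
  have "Suc (i-2) < length ps" "Suc (i-2) = i-1" using i i2 by auto
  then have "E (ps!(i-2)) (ps!(i-1))" using wk unfolding is_walk_def by metis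
  then have ey1: "E (ps!(i-1)) (ps!(i-2))" using sy by blast
  have "Suc (i-1) < length ps" "Suc (i-1) = i" using i i2 by auto
  then have ey2: "E (ps!(i-1)) (ps!i)" using wk unfolding is_walk_def by metis
  have dy: "ps!(i-2) \<noteq> ps!i"
  proof
    assume "ps!(i-2) = ps!i"
    moreover have "i-2 < length ps" using i by simp
    ultimately have "i-2 = i" using inj i by blast
    then show False using i2 by simp
  qed
  have N1: "\<And>w. E (ps!(i-1)) w \<Longrightarrow> w = ps!(i-2) \<or> w = ps!i"
    using three_nb[OF g lgq nc, unfolded q0, OF ey1 ey2] dy by blast
  show False
  proof (cases "i = 2")
    case True
    have "\<not> V \<subseteq> {ps!0, ps!1, ps!2}"
    proof
      assume "V \<subseteq> {ps!0, ps!1, ps!2}"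
      then have "card V \<le> card {ps!0, ps!1, ps!2}" by (intro card_mono) auto
      also have "\<dots> \<le> 3" by (simp add: card_insert_if)
      finally show False using assms(3) by simp
    qed
    then obtain z where z: "z \<in> V" "z \<notin> {ps!0, ps!1, ps!2}" by blast
    have c2V: "ps!2 \<in> V" using sV i True by auto
    have "connected_on E (V - {ps!2})" using assms(2) c2V by (simp add: two_connected_def)
    moreover have "ps!0 \<noteq> ps!i" using e0i sg_irr[OF g] by metis
    then have "ps!0 \<in> V - {ps!2}" using x0V True by simp
    ultimately obtain xs where xs: "is_walk E xs" "hd xs = ps!0" "last xs = z" "set xs \<subseteq> V - {ps!2}"
      using z unfolding connected_on_def by (metis Diff_iff insertCI singletonD)
    have "last xs \<in> {ps!0, ps!1}"
    proof (rule closed_walk[OF xs(1) xs(4)])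
      show "hd xs \<in> {ps!0, ps!1}" using xs by simp
      show "\<forall>a\<in>{ps!0, ps!1}. \<forall>w. E a w \<longrightarrow> w \<in> {ps!0, ps!1} \<or> w = ps!2"
        using N0 N1 True by auto
    qed
    then show False using xs z by auto
  next
    case False
    then have i3: "3 \<le> i" using i2 by simp
    define x where "x = ps!0"
    define y where "y = ps!(i-1)"
    have yV: "y \<in> V" using sV i by (auto simp: y_def)
    have xy: "x \<noteq> y"
    proof
      assume "x = y"
      moreover have "0 < length ps" "i-1 < length ps" using i by auto
      ultimately have "0 = i-1" using inj unfolding x_def y_def by blast
      then show False using i3 by simp
    qed
    have nxy: "\<not> E x y"
    proof
      assume "E x y"
      then have "y = ps!1 \<or> y = ps!i" using N0 by (simp add: x_def)
      moreover have "i-1 < length ps" "1 < length ps" using i i3 by auto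
      ultimately have "i-1 = 1 \<or> i-1 = i" using inj i(1) unfolding y_def by blast
      then show False using i3 by auto
    qed
    have U: "nbhd V E x \<union> nbhd V E y \<subseteq> {ps!1, ps!i, ps!(i-2)}"
      using N0 N1 by (auto simp: nbhd_def x_def y_def)
    have "card (nbhd V E x \<union> nbhd V E y) \<le> card {ps!1, ps!i, ps!(i-2)}"
      using U by (intro card_mono) auto
    also have "\<dots> \<le> 3" by (simp add: card_insert_if)
    finally have c3: "card (nbhd V E x \<union> nbhd V E y) \<le> 3" .
    have yn: "y \<in> V - (nbhd V E x \<union> {x})" using yV nxy xy by (simp add: nbhd_def)
    have A: "\<exists>y' \<in> V - (nbhd V E x \<union> {x}). card (nbhd V E x \<union> nbhd V E y') \<le> 3"
      using yn c3 by blast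
    have nyx: "\<not> E y x" using nxy sy by blast
    have xn: "x \<in> V - (nbhd V E y \<union> {y})" using x0V nyx xy by (simp add: nbhd_def x_def)
    have c3': "card (nbhd V E y \<union> nbhd V E x) \<le> 3" using c3 by (simp add: Un_commute)
    have B: "\<exists>y' \<in> V - (nbhd V E y \<union> {y}). card (nbhd V E y \<union> nbhd V E y') \<le> 3"
      using xn c3' by blast
    have xV: "x \<in> V" using x0V by (simp add: x_def)
    have "x = y" using assms(4) A B xV yV by blast
    then show False using xy by simp
  qed
qed

end
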